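(* For a positive integer $h$ and a prime $p$, let $m_p(h)$ denote the exponent of $p$ in $h$ (so $p^{m_p(h)}\mid h$, $p^{m_p(h)+1}\nmid h$). Define $$W_2(h)=\begin{cases}\tfrac14, & m_2(h)=0,\\[2pt] \dfrac{2^{m_2(h)+1}-3}{2^{m_2(h)+2}}, & m_2(h)\ge 1,\end{cases}\qquad \mathscr{T}_h=2W_2(h)\prod_{\substack{p\equiv 3 \ (\mathrm{mod}\ 4)\\ p\mid h}}\frac{1-p^{-(m_p(h)+1)}}{1-p^{-1}},$$ and let $\beta=\frac{1}{\sqrt2}\prod_{p\equiv 3\ (\mathrm{mod}\ 4)}(1-p^{-2})^{-1/2}$ (the Landau–Ramanujan constant). Then for every $\varepsilon>0$, as $H\to\infty$, $$\sum_{\substack{1\le d_1,d_2\le H\\ d_1\neq d_2}}\mathscr{T}_{|d_2-d_1|}=2\sum_{1\le h\le H-1}(H-h)\,\mathscr{T}_h=\beta^2H^2+O_\varepsilon(H^{1+\varepsilon}).$$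
   Context: Here $p$ ranges over primes. $\mathscr{T}_h$ is the singular series of the Connors–Keating pair-correlation conjecture for integers representable as a sum of two squares. *)

theory Defs
  imports "HOL-Analysis.Analysis" "HOL-Library.Landau_Symbols"
begin

definition W2 :: "nat \<Rightarrow> real" where
  "W2 h = (if multiplicity (2::nat) h = 0 then 1/4
           else (2 ^ (multiplicity (2::nat) h + 1) - 3) / 2 ^ (multiplicity (2::nat) h + 2))"

definition singT :: "nat \<Rightarrow> real" where
  "singT h = 2 * W2 h *
     (\<Prod>p\<in>{p. prime p \<and> p mod 4 = 3 \<and> p dvd h}.
        (1 - (real p) powr (- (real (multiplicity p h) + 1))) / (1 - 1 / real p))"

definition LR_beta :: real where
  "LR_beta = (1 / sqrt 2) *
     (\<Prod>n. if prime n \<and> n mod 4 = 3 then (1 - 1 / (real n)^2) powr (-1/2) else 1)"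

end

theory Submission
  imports Defs "HOL-Real_Asymp.Real_Asymp"
begin

definition ESet :: "nat set \<Rightarrow> (nat \<Rightarrow> nat) \<Rightarrow> nat set" where
  "ESet P J = {n. n > 0 \<and> (\<forall>q. prime q \<longrightarrow> q dvd n \<longrightarrow> q \<in> P) \<and> (\<forall>p\<in>P. multiplicity p n \<le> J p)}"

lemma ESet_image:
  assumes fin: "finite P" and pr: "\<forall>p\<in>P. prime p"
  shows "ESet P J = (\<lambda>g. \<Prod>p\<in>P. p ^ g p) ` PiE P (\<lambda>p. {0..J p})"
proof (intro equalityI subsetI)
  fix n assume n: "n \<in> ESet P J"
  hence n0: "n > 0" and nq: "\<And>q. prime q \<Longrightarrow> q dvd n \<Longrightarrow> q \<in> P"
    and nm: "\<And>p. p\<in>P \<Longrightarrow> multiplicity p n \<le> J p" by (auto simp: ESet_def)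
  define g where "g = restrict (\<lambda>p. multiplicity p n) P"
  have gP: "g \<in> PiE P (\<lambda>p. {0..J p})" using nm by (auto simp: g_def)
  have "(\<Prod>p\<in>P. p ^ g p) = (\<Prod>p\<in>P. p ^ multiplicity p n)"
    by (rule prod.cong) (auto simp: g_def)
  also have "\<dots> = n"
  proof -
    have ne: "(\<Prod>p\<in>P. p ^ multiplicity p n) \<noteq> 0" using pr by (auto simp: prime_gt_0_nat intro!: prod_pos)
    have "normalize (\<Prod>p\<in>P. p ^ multiplicity p n) = normalize n"
    proof (rule multiplicity_eq_imp_eq[OF ne])
      show "n \<noteq> 0" using n0 by simp
      fix q :: nat assume q: "prime q"
      show "multiplicity q (\<Prod>p\<in>P. p ^ multiplicity p n) = multiplicity q n"
      proof -
        have "q \<notin> P \<Longrightarrow> multiplicity q n = 0" using nq[OF q] by (metis not_dvd_imp_multiplicity_0)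
        thus ?thesis using fin pr q by (simp add: multiplicity_prod_prime_powers)
      qed
    qed
    thus ?thesis by simp
  qed
  finally have eqn: "(\<Prod>p\<in>P. p ^ g p) = n" .
  show "n \<in> (\<lambda>g. \<Prod>p\<in>P. p ^ g p) ` PiE P (\<lambda>p. {0..J p})"
    by (rule image_eqI[where f="\<lambda>g. \<Prod>p\<in>P. p ^ g p", OF eqn[symmetric] gP])
next
  fix n assume "n \<in> (\<lambda>g. \<Prod>p\<in>P. p ^ g p) ` PiE P (\<lambda>p. {0..J p})"
  then obtain g where g: "g \<in> PiE P (\<lambda>p. {0..J p})" and n: "n = (\<Prod>p\<in>P. p ^ g p)" by blast
  have n0: "n > 0" using pr n by (auto simp: prime_gt_0_nat intro!: prod_pos)
  have mult: "\<And>q. prime q \<Longrightarrow> multiplicity q n = (if q \<in> P then g q else 0)"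
    unfolding n by (rule multiplicity_prod_prime_powers[OF fin]) (use pr in auto)
  show "n \<in> ESet P J"
    unfolding ESet_def
  proof (intro CollectI conjI allI impI ballI n0)
    fix q :: nat assume q: "prime q" "q dvd n"
    hence "multiplicity q n > 0" using n0 by (simp add: prime_multiplicity_gt_zero_iff)
    thus "q \<in> P" using mult[OF q(1)] by (auto split: if_splits)
  next
    fix p assume p: "p \<in> P"
    thus "multiplicity p n \<le> J p" using mult[of p] pr g by auto
  qed
qed

lemma ESet_inj:
  fixes P :: "nat set"
  assumes fin: "finite P" and pr: "\<forall>p\<in>P. prime p"
  shows "inj_on (\<lambda>g. \<Prod>p\<in>P. p ^ g p) (PiE P (\<lambda>p. {0..J p}))"
proof (rule inj_onI)
  fix g h assume g: "g \<in> PiE P (\<lambda>p. {0..J p})" and h: "h \<in> PiE P (\<lambda>p. {0..J p})"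
    and eq: "(\<Prod>p\<in>P. p ^ g p) = (\<Prod>p\<in>P. p ^ h p)"
  show "g = h"
  proof (rule PiE_ext[OF g h])
    fix i assume i: "i \<in> P"
    have "multiplicity i (\<Prod>p\<in>P. p ^ g p) = multiplicity i (\<Prod>p\<in>P. p ^ h p)" using eq by simp
    thus "g i = h i" using fin pr i by (simp add: multiplicity_prod_prime_powers)
  qed
qed

lemma euler_fin:
  assumes fin: "finite P" and pr: "\<forall>p\<in>P. prime p"
  shows "(\<Prod>p\<in>P. \<Sum>j\<in>{0..J p}. (1 / real p ^ s) ^ j) = (\<Sum>n\<in>ESet P J. 1 / real n ^ s)"
proof -
  have "(\<Prod>p\<in>P. \<Sum>j\<in>{0..J p}. (1 / real p ^ s) ^ j)
      = (\<Sum>g\<in>PiE P (\<lambda>p. {0..J p}). \<Prod>p\<in>P. (1 / real p ^ s) ^ g p)"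
    using fin by (intro prod_sum_PiE) auto
  also have "\<dots> = (\<Sum>g\<in>PiE P (\<lambda>p. {0..J p}). 1 / real (\<Prod>p\<in>P. p ^ g p) ^ s)"
  proof (intro sum.cong refl)
    fix g
    have "(\<Prod>p\<in>P. (1 / real p ^ s) ^ g p) = (\<Prod>p\<in>P. 1 / (real p ^ g p) ^ s)"
      by (intro prod.cong refl) (metis power_one_over power_mult mult.commute)
    also have "\<dots> = 1 / (\<Prod>p\<in>P. (real p ^ g p) ^ s)" by (simp add: prod_dividef)
    also have "\<dots> = 1 / real (\<Prod>p\<in>P. p ^ g p) ^ s" by (simp add: of_nat_prod prod_power_distrib)
    finally show "(\<Prod>p\<in>P. (1 / real p ^ s) ^ g p) = 1 / real (\<Prod>p\<in>P. p ^ g p) ^ s" .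
  qed
  also have "\<dots> = (\<Sum>n\<in>ESet P J. 1 / real n ^ s)"
    using ESet_inj[OF fin pr, of J] ESet_image[OF fin pr, of J]
    by (simp add: sum.reindex)
  finally show ?thesis .
qed



lemma card_multiples:
  fixes m N :: nat assumes m: "m > 0"
  shows "card {h\<in>{1..N}. m dvd h} = N div m"
proof -
  have "{h\<in>{1..N}. m dvd h} = (\<lambda>j. m * j) ` {1..N div m}"
  proof (intro equalityI subsetI)
    fix h assume h: "h \<in> {h\<in>{1..N}. m dvd h}"
    hence h1: "1 \<le> h" "h \<le> N" "m dvd h" by simp_all
    from h1(3) obtain j where j: "h = m * j" by (rule dvdE)
    have j1: "1 \<le> j" using h1(1) j by (cases j) simp_all
    have "m * j div m \<le> N div m" using h1(2) j by (intro div_le_mono) simp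
    hence "j \<le> N div m" using m by simp
    with j1 have "j \<in> {1..N div m}" by simp
    thus "h \<in> (\<lambda>j. m * j) ` {1..N div m}" unfolding j by (rule imageI)
  next
    fix h assume "h \<in> (\<lambda>j. m * j) ` {1..N div m}"
    then obtain j where j: "h = m * j" and jA: "j \<in> {1..N div m}" by (rule imageE)
    have "m * j \<le> m * (N div m)" using jA by simp
    also have "\<dots> \<le> N" by simp
    finally have "h \<le> N" using j by simp
    moreover have "h \<ge> 1" using j jA m by simp
    ultimately show "h \<in> {h\<in>{1..N}. m dvd h}" using j by simp
  qed
  moreover have "inj_on (\<lambda>j. m * j) {1..N div m}" using m by (simp add: inj_on_def)
  ultimately show ?thesis by (simp add: card_image)
qed

lemma geom_factor:
  fixes p m :: nat assumes p: "prime p"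
  shows "(1 - real p powr (- (real m + 1))) / (1 - 1 / real p) = (\<Sum>j\<in>{0..m}. (1 / real p ^ 1) ^ j)"
proof -
  have p1: "real p > 1" using p prime_gt_1_nat by simp
  have e: "- (real m + 1) = - real (Suc m)" by simp
  have "real p powr (- (real m + 1)) = 1 / real p powr real (Suc m)" by (simp only: e powr_minus_divide)
  also have "\<dots> = 1 / real p ^ Suc m" using p1 by (subst powr_realpow) auto
  also have "\<dots> = (1 / real p) ^ Suc m" by (simp only: power_one_over)
  finally have "real p powr (- (real m + 1)) = (1 / real p) ^ Suc m" .
  moreover have "1 / real p \<noteq> 1" using p1 by simp
  ultimately show ?thesis by (simp add: atLeast0AtMost sum_gp0)
qed

definition Dn :: "nat \<Rightarrow> bool" where
  "Dn n \<longleftrightarrow> n > 0 \<and> (\<forall>q. prime q \<longrightarrow> q dvd n \<longrightarrow> q mod 4 = 3)"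

definition P3 :: "nat \<Rightarrow> nat set" where
  "P3 h = {p. prime p \<and> p mod 4 = 3 \<and> p dvd h}"

lemma P3_finite: "h > 0 \<Longrightarrow> finite (P3 h)"
  by (rule finite_subset[of _ "{..h}"]) (auto simp: P3_def dest: dvd_imp_le)

lemma ESet_P3:
  assumes h: "h > 0"
  shows "ESet (P3 h) (\<lambda>p. multiplicity p h) = {n. Dn n \<and> n dvd h}"
proof (intro equalityI subsetI)
  fix n assume "n \<in> ESet (P3 h) (\<lambda>p. multiplicity p h)"
  hence n0: "n > 0" and nq: "\<And>q. prime q \<Longrightarrow> q dvd n \<Longrightarrow> q \<in> P3 h"
    and nm: "\<And>p. p \<in> P3 h \<Longrightarrow> multiplicity p n \<le> multiplicity p h" by (auto simp: ESet_def)
  have "Dn n" using n0 nq by (auto simp: Dn_def P3_def)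
  moreover have "n dvd h"
  proof (rule multiplicity_le_imp_dvd)
    show "n \<noteq> 0" using n0 by simp
    fix p :: nat assume p: "prime p"
    show "multiplicity p n \<le> multiplicity p h"
    proof (cases "p dvd n")
      case True thus ?thesis using nm nq p by blast
    next
      case False thus ?thesis by (simp add: not_dvd_imp_multiplicity_0)
    qed
  qed
  ultimately show "n \<in> {n. Dn n \<and> n dvd h}" by simp
next
  fix n assume "n \<in> {n. Dn n \<and> n dvd h}"
  hence D: "Dn n" and nh: "n dvd h" by auto
  show "n \<in> ESet (P3 h) (\<lambda>p. multiplicity p h)"
    unfolding ESet_def
  proof (intro CollectI conjI allI impI ballI)
    show "n > 0" using D by (simp add: Dn_def)
    fix q :: nat assume "prime q" "q dvd n"
    thus "q \<in> P3 h" using D nh by (auto simp: Dn_def P3_def intro: dvd_trans)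
  next
    fix p assume "p \<in> P3 h"
    show "multiplicity p n \<le> multiplicity p h" using nh h by (intro dvd_imp_multiplicity_le) auto
  qed
qed

definition a2 :: "nat \<Rightarrow> real" where
  "a2 k = (if k = 0 then 1/2 else if k = 1 then -1/4 else 3 / 2 ^ (k+1))"

lemma a2_sum: "m \<ge> 1 \<Longrightarrow> (\<Sum>k\<le>m. a2 k) = 1 - 3 / 2 ^ (m+1)"
proof (induction m rule: dec_induct)
  case base thus ?case by (simp add: a2_def)
next
  case (step m)
  thus ?case by (simp add: a2_def field_simps)
qed

lemma W2_sum: "2 * W2 h = (\<Sum>k\<le>multiplicity 2 h. a2 k)"
proof (cases "multiplicity 2 h = 0")
  case True thus ?thesis by (simp add: W2_def a2_def)
next
  case False
  hence "(\<Sum>k\<le>multiplicity 2 h. a2 k) = 1 - 3 / 2 ^ (multiplicity 2 h + 1)" by (intro a2_sum) simp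
  thus ?thesis using False by (simp add: W2_def field_simps)
qed

lemma singT_eq:
  assumes h: "h > 0"
  shows "singT h = (\<Sum>k\<le>multiplicity 2 h. a2 k) * (\<Sum>n\<in>{n. Dn n \<and> n dvd h}. 1 / real n)"
proof -
  have "(\<Prod>p\<in>{p. prime p \<and> p mod 4 = 3 \<and> p dvd h}.
        (1 - (real p) powr (- (real (multiplicity p h) + 1))) / (1 - 1 / real p))
      = (\<Prod>p\<in>P3 h. \<Sum>j\<in>{0..multiplicity p h}. (1 / real p ^ 1) ^ j)"
    unfolding P3_def by (intro prod.cong refl geom_factor) simp
  also have "\<dots> = (\<Sum>n\<in>ESet (P3 h) (\<lambda>p. multiplicity p h). 1 / real n ^ 1)"
    by (rule euler_fin) (auto simp: P3_finite h P3_def)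
  also have "\<dots> = (\<Sum>n\<in>{n. Dn n \<and> n dvd h}. 1 / real n)" by (simp add: ESet_P3 h)
  finally show ?thesis unfolding singT_def W2_sum by simp
qed



lemma rev_sum: "(\<Sum>d=1..H. F (Suc H - d)) = (\<Sum>h=1..H. (F h :: real))"
  by (subst (2) sum.atLeastAtMost_rev) simp

lemma absdiff1: "d \<in> {1..H} \<Longrightarrow> nat \<bar>int d - int (Suc H)\<bar> = Suc H - d"
  by auto

lemma absdiff2: "d \<in> {1..H} \<Longrightarrow> nat \<bar>int (Suc H) - int d\<bar> = Suc H - d"
  by auto

lemma pairs_V:
  fixes F :: "nat \<Rightarrow> real"
  shows "(\<Sum>d1\<in>{1..H}. \<Sum>d2\<in>{1..H}-{d1}. F (nat \<bar>int d2 - int d1\<bar>))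
         = 2 * (\<Sum>h=1..H. real (H - h) * F h)"
proof (induction H)
  case 0 thus ?case by simp
next
  case (Suc H)
  have ins: "{1..Suc H} = insert (Suc H) {1..H}" by auto
  have A: "(\<Sum>d2\<in>{1..Suc H}-{Suc H}. F (nat \<bar>int d2 - int (Suc H)\<bar>)) = (\<Sum>h=1..H. F h)"
  proof -
    have "{1..Suc H}-{Suc H} = {1..H}" by auto
    hence "(\<Sum>d2\<in>{1..Suc H}-{Suc H}. F (nat \<bar>int d2 - int (Suc H)\<bar>)) = (\<Sum>d=1..H. F (Suc H - d))"
      by (simp only:) (intro sum.cong refl arg_cong[where f=F] absdiff1, assumption)
    thus ?thesis by (simp only: rev_sum)
  qed
  have B: "(\<Sum>d2\<in>{1..Suc H}-{d1}. F (nat \<bar>int d2 - int d1\<bar>))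
        = F (Suc H - d1) + (\<Sum>d2\<in>{1..H}-{d1}. F (nat \<bar>int d2 - int d1\<bar>))" if d1: "d1 \<in> {1..H}" for d1
  proof -
    have e1: "{1..Suc H}-{d1} = insert (Suc H) ({1..H}-{d1})" using d1 by auto
    have e2: "nat \<bar>int (Suc H) - int d1\<bar> = Suc H - d1" using d1 by (rule absdiff2)
    have fin: "finite ({1..H}-{d1})" by simp
    have nin: "Suc H \<notin> {1..H}-{d1}" by simp
    show ?thesis by (simp only: e1 sum.insert[OF fin nin] e2)
  qed
  have "(\<Sum>d1\<in>{1..Suc H}. \<Sum>d2\<in>{1..Suc H}-{d1}. F (nat \<bar>int d2 - int d1\<bar>))
      = (\<Sum>h=1..H. F h) + (\<Sum>d1\<in>{1..H}. \<Sum>d2\<in>{1..Suc H}-{d1}. F (nat \<bar>int d2 - int d1\<bar>))"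
  proof -
    define G where "G = (\<lambda>d1. \<Sum>d2\<in>{1..Suc H}-{d1}. F (nat \<bar>int d2 - int d1\<bar>))"
    have "sum G {1..Suc H} = sum G {1..H} + G (Suc H)" by (simp add: sum.cl_ivl_Suc)
    moreover have "G (Suc H) = (\<Sum>h=1..H. F h)" unfolding G_def by (rule A)
    ultimately show ?thesis unfolding G_def by simp
  qed
  also have "(\<Sum>d1\<in>{1..H}. \<Sum>d2\<in>{1..Suc H}-{d1}. F (nat \<bar>int d2 - int d1\<bar>))
      = (\<Sum>d1\<in>{1..H}. F (Suc H - d1)) + (\<Sum>d1\<in>{1..H}. \<Sum>d2\<in>{1..H}-{d1}. F (nat \<bar>int d2 - int d1\<bar>))"
    by (subst sum.distrib[symmetric]) (rule sum.cong[OF refl B])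
  also have "(\<Sum>d1\<in>{1..H}. F (Suc H - d1)) = (\<Sum>h=1..H. F h)" by (rule rev_sum)
  also note Suc.IH
  also have "(\<Sum>h=1..H. F h) + ((\<Sum>h=1..H. F h) + 2 * (\<Sum>h=1..H. real (H - h) * F h))
       = 2 * (\<Sum>h=1..H. real (Suc H - h) * F h)"
  proof -
    have "(\<Sum>h=1..H. real (Suc H - h) * F h) = (\<Sum>h=1..H. real (H - h) * F h + F h)"
      by (intro sum.cong refl) (auto simp: Suc_diff_le algebra_simps)
    thus ?thesis by (simp add: sum.distrib)
  qed
  also have "(\<Sum>h=1..H. real (Suc H - h) * F h) = (\<Sum>h=1..Suc H. real (Suc H - h) * F h)"
    by (simp add: sum.cl_ivl_Suc)
  finally show ?case .
qed

lemma pairs_sum: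
  fixes F :: "nat \<Rightarrow> real"
  shows "(\<Sum>(d1, d2)\<in>{(d1, d2). d1 \<in> {1..H} \<and> d2 \<in> {1..H} \<and> d1 \<noteq> d2}. F (nat \<bar>int d2 - int d1\<bar>))
         = 2 * (\<Sum>h = 1..H - 1. real (H - h) * F h)"
proof -
  have "{(d1, d2). d1 \<in> {1..H} \<and> d2 \<in> {1..H} \<and> d1 \<noteq> d2} = Sigma {1..H} (\<lambda>d1. {1..H}-{d1})" by auto
  hence "(\<Sum>(d1, d2)\<in>{(d1, d2). d1 \<in> {1..H} \<and> d2 \<in> {1..H} \<and> d1 \<noteq> d2}. F (nat \<bar>int d2 - int d1\<bar>))
     = (\<Sum>d1\<in>{1..H}. \<Sum>d2\<in>{1..H}-{d1}. F (nat \<bar>int d2 - int d1\<bar>))"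
    by (simp add: sum.Sigma)
  also have "\<dots> = 2 * (\<Sum>h=1..H. real (H - h) * F h)" by (rule pairs_V)
  also have "(\<Sum>h=1..H. real (H - h) * F h) = (\<Sum>h=1..H-1. real (H - h) * F h)"
    by (cases H) (simp_all add: sum.cl_ivl_Suc)
  finally show ?thesis .
qed

lemma tri_aux:
  fixes f :: "nat \<Rightarrow> real"
  shows "(\<Sum>h=1..H. real (Suc H - h) * f h) = (\<Sum>N=1..H. \<Sum>h=1..N. f h)"
proof (induction H)
  case 0 thus ?case by simp
next
  case (Suc H)
  have "(\<Sum>h=1..Suc H. real (Suc (Suc H) - h) * f h) = (\<Sum>h=1..Suc H. real (Suc H - h) * f h + f h)"
    by (intro sum.cong refl) (auto simp: Suc_diff_le algebra_simps)
  also have "\<dots> = (\<Sum>h=1..H. real (Suc H - h) * f h) + (\<Sum>h=1..Suc H. f h)"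
    by (simp add: sum.distrib sum.cl_ivl_Suc)
  also note Suc.IH
  finally show ?case by (simp add: sum.cl_ivl_Suc)
qed

lemma tri:
  fixes f :: "nat \<Rightarrow> real"
  shows "(\<Sum>h=1..H-1. real (H - h) * f h) = (\<Sum>N=1..H-1. \<Sum>h=1..N. f h)"
  using tri_aux[of "H-1" f] by (cases H) simp_all



lemma m2_le: assumes h: "h > 0" shows "multiplicity 2 h \<le> h"
proof -
  have "2 ^ multiplicity 2 h dvd h" by (rule multiplicity_dvd)
  hence "2 ^ multiplicity 2 h \<le> h" using h by (rule dvd_imp_le)
  thus ?thesis using less_exp[of "multiplicity 2 h"] by linarith
qed

lemma pow2_dvd_iff: assumes h: "h > 0" shows "(2::nat) ^ k dvd h \<longleftrightarrow> k \<le> multiplicity 2 h"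
proof -
  have "\<not> is_unit (2::nat)" by simp
  thus ?thesis using h power_dvd_iff_le_multiplicity[of h 2 k] by simp
qed

lemma Dn_odd: "Dn n \<Longrightarrow> coprime (2::nat) n"
proof -
  assume D: "Dn n"
  have "\<not> 2 dvd n"
  proof
    assume "2 dvd n"
    hence "(2::nat) mod 4 = 3" using D two_is_prime_nat unfolding Dn_def by blast
    thus False by simp
  qed
  thus "coprime (2::nat) n" using two_is_prime_nat by (simp add: prime_imp_coprime)
qed

lemma dvd_combine: assumes "Dn n" shows "(2::nat) ^ k dvd h \<and> n dvd h \<longleftrightarrow> 2 ^ k * n dvd h"
proof
  assume a: "2 ^ k dvd h \<and> n dvd h"
  have "coprime ((2::nat) ^ k) n" using Dn_odd[OF assms] by simp
  thus "2 ^ k * n dvd h" using a by (simp add: divides_mult)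
next
  assume "2 ^ k * n dvd h"
  thus "2 ^ k dvd h \<and> n dvd h" by (meson dvd_mult_left dvd_mult_right)
qed

lemma singT_box:
  assumes h: "h \<in> {1..N}"
  shows "singT h = (\<Sum>k\<le>N. \<Sum>n\<in>{1..N}. if (2::nat) ^ k dvd h \<and> Dn n \<and> n dvd h then a2 k / real n else 0)"
proof -
  have h0: "h > 0" and hN: "h \<le> N" using h by auto
  have s1: "(\<Sum>k\<le>multiplicity 2 h. a2 k) = (\<Sum>k\<le>N. if (2::nat) ^ k dvd h then a2 k else 0)"
  proof -
    have eq: "{..multiplicity 2 h} = {k\<in>{..N}. (2::nat) ^ k dvd h}"
      using m2_le[OF h0] hN pow2_dvd_iff[OF h0] by auto
    show ?thesis unfolding eq by (rule sum.inter_filter) simp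
  qed
  have s2: "(\<Sum>n\<in>{n. Dn n \<and> n dvd h}. 1 / real n) = (\<Sum>n\<in>{1..N}. if Dn n \<and> n dvd h then 1 / real n else 0)"
  proof -
    have eq: "{n. Dn n \<and> n dvd h} = {n\<in>{1..N}. Dn n \<and> n dvd h}"
      using hN h0 by (auto simp: Dn_def dest: dvd_imp_le)
    show ?thesis unfolding eq by (rule sum.inter_filter) simp
  qed
  show ?thesis unfolding singT_eq[OF h0] s1 s2 sum_product
    by (intro sum.cong refl) auto
qed

lemma S_formula:
  "(\<Sum>h=1..N. singT h) = (\<Sum>k\<le>N. \<Sum>n\<in>{1..N}. if Dn n then a2 k / real n * real (N div (2 ^ k * n)) else 0)"
proof -
  have "(\<Sum>h=1..N. singT h)
      = (\<Sum>h=1..N. \<Sum>k\<le>N. \<Sum>n\<in>{1..N}. if (2::nat) ^ k dvd h \<and> Dn n \<and> n dvd h then a2 k / real n else 0)"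
    by (rule sum.cong[OF refl singT_box])
  also have "\<dots> = (\<Sum>k\<le>N. \<Sum>n\<in>{1..N}. \<Sum>h=1..N. if (2::nat) ^ k dvd h \<and> Dn n \<and> n dvd h then a2 k / real n else 0)"
    by (subst sum.swap) (subst (2) sum.swap, rule refl)
  also have "\<dots> = (\<Sum>k\<le>N. \<Sum>n\<in>{1..N}. if Dn n then a2 k / real n * real (N div (2 ^ k * n)) else 0)"
  proof (intro sum.cong refl)
    fix k n
    show "(\<Sum>h=1..N. if (2::nat) ^ k dvd h \<and> Dn n \<and> n dvd h then a2 k / real n else 0)
        = (if Dn n then a2 k / real n * real (N div (2 ^ k * n)) else 0)"
    proof (cases "Dn n")
      case False thus ?thesis by simp
    next
      case True
      hence n0: "n > 0" by (simp add: Dn_def)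
      have "(\<Sum>h=1..N. if (2::nat) ^ k dvd h \<and> Dn n \<and> n dvd h then a2 k / real n else 0)
          = (\<Sum>h=1..N. if 2 ^ k * n dvd h then a2 k / real n else 0)"
        by (intro sum.cong refl) (simp add: dvd_combine[OF True] True)
      also have "\<dots> = (\<Sum>h\<in>{h\<in>{1..N}. 2 ^ k * n dvd h}. a2 k / real n)"
        by (rule sum.inter_filter[symmetric]) simp
      also have "\<dots> = a2 k / real n * real (card {h\<in>{1..N}. 2 ^ k * n dvd h})"
        by simp
      also have "card {h\<in>{1..N}. 2 ^ k * n dvd h} = N div (2 ^ k * n)"
        using n0 by (intro card_multiples) simp
      finally show ?thesis using True by simp
    qed
  qed
  finally show ?thesis .
qed



definition zf :: "nat \<Rightarrow> real" where "zf n = (if Dn n then 1 / real n ^ 2 else 0)"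
definition Zc :: real where "Zc = suminf zf"
definition Zp :: "nat \<Rightarrow> real" where "Zp N = (\<Sum>n\<in>{1..N}. zf n)"

lemma zf_nonneg: "zf n \<ge> 0" by (simp add: zf_def)
lemma zf_le: "zf n \<le> 1 / real n ^ 2" by (simp add: zf_def)
lemma zf_0: "zf 0 = 0" by (simp add: zf_def Dn_def)

lemma zf_summable: "summable zf"
proof (rule summable_comparison_test')
  show "summable (\<lambda>n. inverse (real n ^ 2))" by (rule inverse_power_summable) simp
  fix n :: nat show "norm (zf n) \<le> inverse (real n ^ 2)"
    using zf_nonneg[of n] zf_le[of n] by (simp add: divide_inverse)
qed

lemma Zp_lessThan: "Zp N = (\<Sum>n<Suc N. zf n)"
proof -
  have "(\<Sum>n<Suc N. zf n) = (\<Sum>n\<in>{0..N}. zf n)" by (simp add: atLeast0AtMost lessThan_Suc_atMost)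
  also have "\<dots> = zf 0 + (\<Sum>n\<in>{1..N}. zf n)" by (simp add: sum.atLeast_Suc_atMost)
  finally show ?thesis by (simp add: Zp_def zf_0)
qed

lemma Zp_tendsto: "Zp \<longlonglongrightarrow> Zc"
proof -
  have "(\<lambda>N. \<Sum>n<N. zf n) \<longlonglongrightarrow> Zc" unfolding Zc_def by (rule summable_LIMSEQ[OF zf_summable])
  hence "(\<lambda>N. \<Sum>n<Suc N. zf n) \<longlonglongrightarrow> Zc" by (rule LIMSEQ_Suc)
  thus ?thesis by (simp add: Zp_lessThan[abs_def])
qed

lemma Zp_le_Z: "Zp N \<le> Zc"
  unfolding Zp_def Zc_def using zf_summable zf_nonneg by (intro sum_le_suminf) auto

lemma Zp_nonneg: "Zp N \<ge> 0" unfolding Zp_def using zf_nonneg by (intro sum_nonneg) auto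

lemma Zp_tail: assumes "1 \<le> N" "N \<le> M" shows "Zp M \<le> Zp N + 1 / real N - 1 / real M"
  using assms(2)
proof (induction M rule: dec_induct)
  case base thus ?case by simp
next
  case (step M)
  have M1: "real M \<ge> 1" using step assms by simp
  have "Zp (Suc M) = Zp M + zf (Suc M)" by (simp add: Zp_def)
  also have "zf (Suc M) \<le> 1 / real (Suc M) ^ 2" by (rule zf_le)
  also have "1 / real (Suc M) ^ 2 \<le> 1 / real M - 1 / real (Suc M)"
  proof -
    define x where "x = real M"
    have x1: "x \<ge> 1" using M1 by (simp add: x_def)
    have e: "1 / x - 1 / (x + 1) = 1 / (x * (x + 1))" using x1 by (simp add: field_simps)
    have "x * (x + 1) \<le> (x + 1) ^ 2" using x1 by (simp add: power2_eq_square algebra_simps)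
    hence "1 / (x + 1) ^ 2 \<le> 1 / (x * (x + 1))" using x1 by (intro divide_left_mono) auto
    thus ?thesis using e by (simp add: x_def add.commute)
  qed
  finally show ?case using step by linarith
qed

lemma Z_tail: assumes "1 \<le> N" shows "Zc \<le> Zp N + 1 / real N"
proof (rule LIMSEQ_le_const2[OF Zp_tendsto])
  show "\<exists>M. \<forall>n\<ge>M. Zp n \<le> Zp N + 1 / real N"
  proof (intro exI allI impI)
    fix n assume "N \<le> n"
    hence "Zp n \<le> Zp N + 1 / real N - 1 / real n" using Zp_tail assms by blast
    moreover have "1 / real n \<ge> 0" by simp
    ultimately show "Zp n \<le> Zp N + 1 / real N" by linarith
  qed
qed

lemma Zp_1: "Zp 1 = 1" by (simp add: Zp_def zf_def Dn_def)

lemma Z_le_2: "Zc \<le> 2" using Z_tail[of 1] Zp_1 by simp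
lemma Z_ge_1: "Zc \<ge> 1" using Zp_le_Z[of 1] Zp_1 by simp



definition Q :: "nat \<Rightarrow> nat set" where "Q n = {p. p \<le> n \<and> prime p \<and> p mod 4 = 3}"
definition gfac :: "nat \<Rightarrow> real" where
  "gfac i = (if prime i \<and> i mod 4 = 3 then 1 / (1 - 1 / real i ^ 2) else 1)"

lemma Q_finite: "finite (Q n)" by (simp add: Q_def)
lemma Q_prime: "\<forall>p\<in>Q n. prime p" by (simp add: Q_def)

lemma x_bounds: "prime p \<Longrightarrow> 0 \<le> 1 / real p ^ 2 \<and> 1 / real p ^ 2 < (1::real)"
proof -
  assume "prime p"
  hence "real p > 1" using prime_gt_1_nat by simp
  hence "real p ^ 2 > 1" by simp
  thus ?thesis by (simp add: divide_less_eq)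
qed

lemma gfac_prod: "(\<Prod>i\<le>n. gfac i) = (\<Prod>p\<in>Q n. 1 / (1 - 1 / real p ^ 2))"
proof -
  have "(\<Prod>p\<in>Q n. 1 / (1 - 1 / real p ^ 2)) = (\<Prod>i\<in>{i\<in>{..n}. prime i \<and> i mod 4 = 3}. 1 / (1 - 1 / real i ^ 2))"
    by (rule prod.cong) (auto simp: Q_def)
  also have "\<dots> = (\<Prod>i\<le>n. gfac i)" by (subst prod.inter_filter) (simp_all add: gfac_def)
  finally show ?thesis by simp
qed

lemma geo_le: fixes x :: real assumes "0 \<le> x" "x < 1" shows "(\<Sum>j\<in>{0..J}. x ^ j) \<le> 1 / (1 - x)"
proof -
  have "(\<Sum>j\<in>{0..J}. x ^ j) = (1 - x ^ Suc J) / (1 - x)" using assms by (simp add: atLeast0AtMost sum_gp0)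
  also have "\<dots> \<le> 1 / (1 - x)" using assms by (intro divide_right_mono) auto
  finally show ?thesis .
qed

lemma geo_tendsto: fixes x :: real assumes "0 \<le> x" "x < 1"
  shows "(\<lambda>J. \<Sum>j\<in>{0..J}. x ^ j) \<longlonglongrightarrow> 1 / (1 - x)"
proof -
  have "(\<lambda>n. x ^ n) sums (1 / (1 - x))" using geometric_sums[of x] assms by simp
  hence "(\<lambda>J. \<Sum>j<J. x ^ j) \<longlonglongrightarrow> 1 / (1 - x)" by (simp add: sums_def)
  hence "(\<lambda>J. \<Sum>j<Suc J. x ^ j) \<longlonglongrightarrow> 1 / (1 - x)" by (rule LIMSEQ_Suc)
  thus ?thesis by (simp add: atLeast0AtMost lessThan_Suc_atMost)
qed

lemma mult_le_self: assumes "m > 0" "prime (p::nat)" shows "multiplicity p m \<le> m"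
proof -
  have "p ^ multiplicity p m dvd m" by (rule multiplicity_dvd)
  hence "p ^ multiplicity p m \<le> m" using assms by (intro dvd_imp_le) auto
  moreover have "(2::nat) ^ multiplicity p m \<le> p ^ multiplicity p m"
    using prime_ge_2_nat[OF assms(2)] by (intro power_mono) auto
  moreover have "multiplicity p m < 2 ^ multiplicity p m" by (rule less_exp)
  ultimately show ?thesis by linarith
qed

lemma ESet_finite: "finite (Q n) \<Longrightarrow> \<forall>p\<in>Q n. prime p \<Longrightarrow> finite (ESet (Q n) J)"
  by (simp add: ESet_image finite_PiE)

lemma ESet_Dn: "m \<in> ESet (Q n) J \<Longrightarrow> Dn m"
  by (auto simp: ESet_def Dn_def Q_def)

lemma Zp_le_P: "Zp n \<le> (\<Prod>i\<le>n. gfac i)"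
proof -
  have "Zp n = (\<Sum>m\<in>{m\<in>{1..n}. Dn m}. 1 / real m ^ 2)"
    unfolding Zp_def zf_def by (subst sum.inter_filter) simp_all
  also have "\<dots> \<le> (\<Sum>m\<in>ESet (Q n) (\<lambda>_. n). 1 / real m ^ 2)"
  proof (rule sum_mono2)
    show "finite (ESet (Q n) (\<lambda>_. n))" by (rule ESet_finite[OF Q_finite Q_prime])
    show "{m \<in> {1..n}. Dn m} \<subseteq> ESet (Q n) (\<lambda>_. n)"
    proof
      fix m assume m: "m \<in> {m \<in> {1..n}. Dn m}"
      hence m0: "m > 0" and mn: "m \<le> n" and D: "Dn m" by auto
      show "m \<in> ESet (Q n) (\<lambda>_. n)" unfolding ESet_def
      proof (intro CollectI conjI allI impI ballI m0)
        fix q :: nat assume q: "prime q" "q dvd m"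
        have "q \<le> n" using dvd_imp_le[OF q(2) m0] mn by simp
        thus "q \<in> Q n" using q D by (simp add: Q_def Dn_def)
      next
        fix p assume "p \<in> Q n"
        hence "prime p" by (simp add: Q_def)
        thus "multiplicity p m \<le> n" using mult_le_self[OF m0] mn le_trans by blast
      qed
    qed
  qed simp
  also have "\<dots> = (\<Prod>p\<in>Q n. \<Sum>j\<in>{0..n}. (1 / real p ^ 2) ^ j)"
    by (rule euler_fin[OF Q_finite Q_prime, symmetric])
  also have "\<dots> \<le> (\<Prod>p\<in>Q n. 1 / (1 - 1 / real p ^ 2))"
  proof (rule prod_mono)
    fix p assume "p \<in> Q n"
    hence "prime p" by (simp add: Q_def)
    hence b: "0 \<le> 1 / real p ^ 2 \<and> 1 / real p ^ 2 < (1::real)" by (rule x_bounds)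
    show "0 \<le> (\<Sum>j\<in>{0..n}. (1 / real p ^ 2) ^ j) \<and> (\<Sum>j\<in>{0..n}. (1 / real p ^ 2) ^ j) \<le> 1 / (1 - 1 / real p ^ 2)"
      using b geo_le[of "1 / real p ^ 2" n] by (auto intro: sum_nonneg)
  qed
  also have "\<dots> = (\<Prod>i\<le>n. gfac i)" by (rule gfac_prod[symmetric])
  finally show ?thesis .
qed

lemma P_le_Z: "(\<Prod>i\<le>n. gfac i) \<le> Zc"
proof -
  have lim: "(\<lambda>J. \<Prod>p\<in>Q n. \<Sum>j\<in>{0..J}. (1 / real p ^ 2) ^ j) \<longlonglongrightarrow> (\<Prod>p\<in>Q n. 1 / (1 - 1 / real p ^ 2))"
  proof (rule tendsto_prod)
    fix p assume "p \<in> Q n"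
    hence "prime p" by (simp add: Q_def)
    hence b: "0 \<le> 1 / real p ^ 2 \<and> 1 / real p ^ 2 < (1::real)" by (rule x_bounds)
    thus "(\<lambda>J. \<Sum>j\<in>{0..J}. (1 / real p ^ 2) ^ j) \<longlonglongrightarrow> 1 / (1 - 1 / real p ^ 2)"
      using geo_tendsto by blast
  qed
  have "(\<Prod>p\<in>Q n. 1 / (1 - 1 / real p ^ 2)) \<le> Zc"
  proof (rule LIMSEQ_le_const2[OF lim], intro exI allI impI)
    fix J :: nat
    have "(\<Prod>p\<in>Q n. \<Sum>j\<in>{0..J}. (1 / real p ^ 2) ^ j) = (\<Sum>m\<in>ESet (Q n) (\<lambda>_. J). 1 / real m ^ 2)"
      by (rule euler_fin[OF Q_finite Q_prime])
    also have "\<dots> = (\<Sum>m\<in>ESet (Q n) (\<lambda>_. J). zf m)"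
      by (intro sum.cong refl) (simp add: zf_def ESet_Dn)
    also have "\<dots> \<le> Zc"
      unfolding Zc_def using zf_summable zf_nonneg ESet_finite[OF Q_finite Q_prime]
      by (intro sum_le_suminf) auto
    finally show "(\<Prod>p\<in>Q n. \<Sum>j\<in>{0..J}. (1 / real p ^ 2) ^ j) \<le> Zc" .
  qed
  thus ?thesis by (simp add: gfac_prod)
qed

lemma P_tendsto: "(\<lambda>n. \<Prod>i\<le>n. gfac i) \<longlonglongrightarrow> Zc"
  by (rule tendsto_sandwich[OF _ _ Zp_tendsto tendsto_const]) (simp_all add: Zp_le_P P_le_Z)

lemma sqrt_prod: "sqrt (\<Prod>i\<in>A. f i) = (\<Prod>i\<in>A. sqrt (f i))"
  by (induction A rule: infinite_finite_induct) (simp_all add: real_sqrt_mult)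

lemma LR_sq: "LR_beta ^ 2 = Zc / 2"
proof -
  define f where "f = (\<lambda>n::nat. if prime n \<and> n mod 4 = 3 then (1 - 1 / (real n)^2) powr (-1/2) else (1::real))"
  have fi: "f i = sqrt (gfac i)" for i
  proof (cases "prime i \<and> i mod 4 = 3")
    case True
    define x where "x = 1 - 1 / (real i)^2"
    have "1 / real i ^ 2 < 1" using x_bounds[of i] True by blast
    hence x0: "x > 0" by (simp add: x_def)
    have "x powr (-1/2) = x powr (- (1/2))" by simp
    also have "\<dots> = inverse (x powr (1/2))" by (rule powr_minus)
    also have "\<dots> = inverse (sqrt x)" using x0 by (simp add: powr_half_sqrt)
    also have "\<dots> = sqrt (1 / x)" by (simp add: real_sqrt_inverse divide_inverse)
    finally show ?thesis using True by (simp add: f_def gfac_def x_def)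
  next
    case False thus ?thesis by (simp only: f_def gfac_def if_not_P[OF False] real_sqrt_one if_False)
  qed
  have "(\<lambda>n. \<Prod>i\<le>n. f (i + 0)) \<longlonglongrightarrow> sqrt Zc"
  proof -
    have "(\<lambda>n. sqrt (\<Prod>i\<le>n. gfac i)) \<longlonglongrightarrow> sqrt Zc" by (intro tendsto_real_sqrt P_tendsto)
    thus ?thesis by (simp add: fi sqrt_prod)
  qed
  moreover have "sqrt Zc \<noteq> 0" using Z_ge_1 by simp
  ultimately have "raw_has_prod f 0 (sqrt Zc)" by (simp add: raw_has_prod_def)
  hence "f has_prod sqrt Zc" by (simp add: has_prod_def)
  hence "prodinf f = sqrt Zc" by (rule has_prod_unique[symmetric])
  hence e: "LR_beta = (1 / sqrt 2) * sqrt Zc" by (simp add: LR_beta_def f_def)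
  show ?thesis unfolding e using Z_ge_1 by (simp add: power_mult_distrib power_divide)
qed



definition Bs :: "nat \<Rightarrow> real" where "Bs N = (\<Sum>k\<le>N. a2 k / 2 ^ k)"

lemma Bs_val_Suc: "Bs (Suc N) = 1/2 - 1 / (2 * 4 ^ Suc N)"
proof (induction N)
  case 0 thus ?case by (simp add: Bs_def a2_def)
next
  case (Suc N)
  have f: "(2::real) ^ N * 2 ^ N = 4 ^ N" by (simp flip: power_mult_distrib)
  have "Bs (Suc (Suc N)) = Bs (Suc N) + a2 (Suc (Suc N)) / 2 ^ Suc (Suc N)" by (simp add: Bs_def)
  also have "a2 (Suc (Suc N)) = 3 / 2 ^ (N + 3)" by (simp add: a2_def power_add)
  also have "3 / 2 ^ (N + 3) / 2 ^ Suc (Suc N) = (3::real) / (32 * 4 ^ N)"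
    by (simp add: power_add f[symmetric])
  finally show ?case using Suc.IH by (simp add: field_simps)
qed

lemma Bs_val: "N \<ge> 1 \<Longrightarrow> Bs N = 1/2 - 1 / (2 * 4 ^ N)"
  using Bs_val_Suc[of "N - 1"] by simp

lemma Bs_err: "real N * \<bar>Bs N - 1/2\<bar> \<le> 1"
proof (cases "N = 0")
  case True thus ?thesis by simp
next
  case False
  hence eq: "\<bar>Bs N - 1/2\<bar> = 1 / (2 * 4 ^ N)" by (simp add: Bs_val)
  have le: "real N \<le> 2 * 4 ^ N"
  proof -
    have "N < 2 ^ N" by (rule less_exp)
    also have "(2::nat) ^ N \<le> 4 ^ N" by (rule power_mono) auto
    finally have "real N \<le> 4 ^ N" by (metis less_imp_le of_nat_le_iff of_nat_numeral of_nat_power)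
    moreover have "(0::real) \<le> 4 ^ N" by simp
    ultimately show ?thesis by linarith
  qed
  have "real N * \<bar>Bs N - 1/2\<bar> \<le> (2 * 4 ^ N) * \<bar>Bs N - 1/2\<bar>" using le by (rule mult_right_mono) simp
  also have "\<dots> = 1" unfolding eq by simp
  finally show ?thesis .
qed

lemma a2_abs: "\<bar>a2 k\<bar> \<le> 2 * (1/2) ^ k"
proof -
  consider "k = 0" | "k = 1" | "k \<ge> 2" by linarith
  thus ?thesis
  proof cases
    case 3
    hence "\<bar>a2 k\<bar> = 3 / 2 ^ (k + 1)" by (simp add: a2_def)
    also have "\<dots> \<le> 2 * (1/2) ^ k" by (simp add: field_simps power_one_over)
    finally show ?thesis .
  qed (simp_all add: a2_def)
qed

lemma a2_abs_sum: "(\<Sum>k\<le>N. \<bar>a2 k\<bar>) \<le> 4"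
proof -
  have "(\<Sum>k\<le>N. \<bar>a2 k\<bar>) \<le> (\<Sum>k\<le>N. 2 * (1/2::real) ^ k)" by (intro sum_mono a2_abs)
  also have "\<dots> = 2 * (\<Sum>k\<le>N. (1/2::real) ^ k)" by (simp add: sum_distrib_left)
  also have "(\<Sum>k\<le>N. (1/2::real) ^ k) = (1 - (1/2) ^ Suc N) / (1 - 1/2)" by (simp add: sum_gp0)
  also have "\<dots> \<le> 2" by simp
  finally show ?thesis by simp
qed

lemma div_err: assumes m: "m > 0" shows "\<bar>real (N div m) - real N / real m\<bar> \<le> 1"
proof -
  have e: "real N = real m * real (N div m) + real (N mod m)"
    by (metis div_mult_mod_eq of_nat_add of_nat_mult mult.commute)
  have "N mod m < m" using m by simp
  hence "real (N mod m) < real m" by simp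
  hence l: "real (N mod m) / real m < 1" using m by simp
  have "real N / real m = real (N div m) + real (N mod m) / real m" using m by (simp add: e field_simps)
  thus ?thesis using l by (simp add: abs_le_iff)
qed

definition S :: "nat \<Rightarrow> real" where "S N = (\<Sum>h=1..N. singT h)"

lemma S_err: "\<bar>S N - real N * Bs N * Zp N\<bar> \<le> 4 * harm N"
proof -
  define X where "X = (\<lambda>k n. if Dn n then a2 k / real n * (real (N div (2 ^ k * n)) - real N / (2 ^ k * real n)) else 0)"
  have main: "real N * Bs N * Zp N = (\<Sum>k\<le>N. \<Sum>n\<in>{1..N}. if Dn n then a2 k / real n * (real N / (2 ^ k * real n)) else 0)"
  proof -
    have "real N * Bs N * Zp N = real N * (\<Sum>k\<le>N. \<Sum>n\<in>{1..N}. a2 k / 2 ^ k * zf n)"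
      by (simp add: Bs_def Zp_def sum_product)
    also have "\<dots> = (\<Sum>k\<le>N. \<Sum>n\<in>{1..N}. real N * (a2 k / 2 ^ k * zf n))" by (simp add: sum_distrib_left)
    also have "\<dots> = (\<Sum>k\<le>N. \<Sum>n\<in>{1..N}. if Dn n then a2 k / real n * (real N / (2 ^ k * real n)) else 0)"
      by (intro sum.cong refl) (simp add: zf_def power2_eq_square field_simps)
    finally show ?thesis .
  qed
  have "S N - real N * Bs N * Zp N = (\<Sum>k\<le>N. \<Sum>n\<in>{1..N}. X k n)"
    unfolding S_def S_formula main X_def by (simp add: sum_subtractf[symmetric]) (intro sum.cong refl, simp add: right_diff_distrib)
  hence "\<bar>S N - real N * Bs N * Zp N\<bar> = \<bar>\<Sum>k\<le>N. \<Sum>n\<in>{1..N}. X k n\<bar>" by simp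
  also have "\<dots> \<le> (\<Sum>k\<le>N. \<bar>\<Sum>n\<in>{1..N}. X k n\<bar>)" by (rule sum_abs)
  also have "\<dots> \<le> (\<Sum>k\<le>N. \<Sum>n\<in>{1..N}. \<bar>X k n\<bar>)" by (intro sum_mono sum_abs)
  also have "\<dots> \<le> (\<Sum>k\<le>N. \<Sum>n\<in>{1..N}. \<bar>a2 k\<bar> * (1 / real n))"
  proof (intro sum_mono)
    fix k n assume n: "n \<in> {1..N}"
    have "\<bar>real (N div (2 ^ k * n)) - real N / real (2 ^ k * n)\<bar> \<le> 1" using n by (intro div_err) simp
    hence d: "\<bar>real (N div (2 ^ k * n)) - real N / (2 ^ k * real n)\<bar> \<le> 1" by simp
    have "\<bar>X k n\<bar> \<le> \<bar>a2 k\<bar> / real n * \<bar>real (N div (2 ^ k * n)) - real N / (2 ^ k * real n)\<bar>"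
      by (simp add: X_def abs_mult)
    also have "\<dots> \<le> \<bar>a2 k\<bar> / real n * 1" using d by (intro mult_left_mono) auto
    finally show "\<bar>X k n\<bar> \<le> \<bar>a2 k\<bar> * (1 / real n)" by simp
  qed
  also have "\<dots> = (\<Sum>k\<le>N. \<bar>a2 k\<bar>) * (\<Sum>n\<in>{1..N}. 1 / real n)" by (simp add: sum_product)
  also have "\<dots> \<le> 4 * (\<Sum>n\<in>{1..N}. 1 / real n)" using a2_abs_sum by (intro mult_right_mono sum_nonneg) auto
  also have "(\<Sum>n\<in>{1..N}. 1 / real n) = harm N" by (simp add: harm_def divide_inverse)
  finally show ?thesis .
qed

lemma harm_bound: "N \<ge> 1 \<Longrightarrow> harm N \<le> 1 + ln (real N)"
  using euler_mascheroni_sequence_decreasing[of 1 N] by (simp add: harm_def)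

lemma err_bound: "\<bar>S N - Zc / 2 * real N\<bar> \<le> 4 * harm N + 3"
proof (cases "N = 0")
  case True thus ?thesis by (simp add: S_def harm_def)
next
  case False
  hence N1: "N \<ge> 1" by simp
  have z1: "Zc - Zp N \<le> 1 / real N" using Z_tail[OF N1] by simp
  have z2: "Zp N \<le> Zc" by (rule Zp_le_Z)
  have z0: "Zp N \<ge> 0" by (rule Zp_nonneg)
  have b: "real N * \<bar>Bs N - 1/2\<bar> \<le> 1" by (rule Bs_err)
  have "real N * Bs N * Zp N - Zc / 2 * real N = (real N * (Bs N - 1/2)) * Zp N - real N / 2 * (Zc - Zp N)"
    by (simp add: field_simps)
  moreover have Bn: "real N / 2 * (Zc - Zp N) \<ge> 0" using z2 by simp
  moreover have An: "\<bar>real N * (Bs N - 1/2) * Zp N\<bar> = \<bar>real N * (Bs N - 1/2)\<bar> * Zp N" using z0 by (simp add: abs_mult)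
  ultimately have "\<bar>real N * Bs N * Zp N - Zc / 2 * real N\<bar> \<le> \<bar>real N * (Bs N - 1/2)\<bar> * Zp N + real N / 2 * (Zc - Zp N)"
    using abs_triangle_ineq4[of "real N * (Bs N - 1/2) * Zp N" "real N / 2 * (Zc - Zp N)"] by simp
  also have "\<bar>real N * (Bs N - 1/2)\<bar> * Zp N \<le> 1 * 2"
    using b z0 z2 Z_le_2 by (intro mult_mono) (simp_all add: abs_mult)
  also have "real N / 2 * (Zc - Zp N) \<le> real N / 2 * (1 / real N)" using z1 by (intro mult_left_mono) auto
  also have "real N / 2 * (1 / real N) = 1/2" using N1 by simp
  finally have "\<bar>real N * Bs N * Zp N - Zc / 2 * real N\<bar> \<le> 5/2" by simp
  thus ?thesis using S_err[of N] by linarith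
qed



lemma gauss: "2 * (\<Sum>N=1..H. real N) = real H * (real H + 1)"
  by (induction H) (simp_all add: algebra_simps)

lemma total_eq: "(\<Sum>(d1, d2)\<in>{(d1, d2). d1 \<in> {1..H} \<and> d2 \<in> {1..H} \<and> d1 \<noteq> d2}.
               singT (nat \<bar>int d2 - int d1\<bar>)) = 2 * (\<Sum>N=1..H-1. S N)"
  unfolding pairs_sum tri S_def by simp

lemma total_bound:
  assumes H1: "H \<ge> 1"
  shows "\<bar>2 * (\<Sum>N=1..H-1. S N) - LR_beta ^ 2 * real H ^ 2\<bar> \<le> real H * (15 + 8 * ln (real H))"
proof -
  have lnH: "ln (real H) \<ge> 0" using H1 by simp
  have g: "2 * (\<Sum>N=1..H-1. real N) = real (H - 1) * real H"
    using gauss[of "H - 1"] H1 by (simp add: of_nat_diff)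
  have "2 * (\<Sum>N=1..H-1. S N) - LR_beta ^ 2 * real H ^ 2
      = 2 * (\<Sum>N=1..H-1. (S N - Zc / 2 * real N)) + Zc / 2 * (2 * (\<Sum>N=1..H-1. real N)) - Zc / 2 * real H ^ 2"
    by (simp add: LR_sq sum_subtractf sum_distrib_left algebra_simps)
  also have "\<dots> = 2 * (\<Sum>N=1..H-1. (S N - Zc / 2 * real N)) - Zc / 2 * real H"
    unfolding g using H1 by (simp add: of_nat_diff power2_eq_square algebra_simps)
  finally have e: "2 * (\<Sum>N=1..H-1. S N) - LR_beta ^ 2 * real H ^ 2
     = 2 * (\<Sum>N=1..H-1. (S N - Zc / 2 * real N)) - Zc / 2 * real H" .
  have "\<bar>\<Sum>N=1..H-1. (S N - Zc / 2 * real N)\<bar> \<le> (\<Sum>N=1..H-1. \<bar>S N - Zc / 2 * real N\<bar>)" by (rule sum_abs)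
  also have "\<dots> \<le> real (card {1..H-1}) * (7 + 4 * ln (real H))"
  proof (rule sum_bounded_above)
    fix N assume N: "N \<in> {1..H-1}"
    hence "harm N \<le> 1 + ln (real N)" by (intro harm_bound) simp
    also have "ln (real N) \<le> ln (real H)" using N by (subst ln_le_cancel_iff) auto
    finally have "harm N \<le> 1 + ln (real H)" by simp
    thus "\<bar>S N - Zc / 2 * real N\<bar> \<le> 7 + 4 * ln (real H)" using err_bound[of N] by linarith
  qed
  also have "\<dots> \<le> real H * (7 + 4 * ln (real H))" using lnH by (intro mult_right_mono) auto
  finally have s: "\<bar>\<Sum>N=1..H-1. (S N - Zc / 2 * real N)\<bar> \<le> real H * (7 + 4 * ln (real H))" .
  have z0: "Zc * real H \<le> 2 * real H" using Z_le_2 by (intro mult_right_mono) auto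
  have z1: "\<bar>Zc / 2 * real H\<bar> = Zc / 2 * real H" using Z_ge_1 by simp
  have z: "\<bar>Zc / 2 * real H\<bar> \<le> real H" unfolding z1 using z0 by linarith
  show ?thesis unfolding e using s z by (simp add: algebra_simps)
qed

theorem theorem1:
  shows "(\<forall>H::nat.
           (\<Sum>(d1, d2)\<in>{(d1, d2). d1 \<in> {1..H} \<and> d2 \<in> {1..H} \<and> d1 \<noteq> d2}.
               singT (nat \<bar>int d2 - int d1\<bar>))
           = 2 * (\<Sum>h = 1..H - 1. real (H - h) * singT h))
         \<and> (\<forall>\<epsilon>::real. \<epsilon> > 0 \<longrightarrow>
              (\<lambda>H::nat. (\<Sum>(d1, d2)\<in>{(d1, d2). d1 \<in> {1..H} \<and> d2 \<in> {1..H} \<and> d1 \<noteq> d2}.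
                            singT (nat \<bar>int d2 - int d1\<bar>)) - LR_beta ^ 2 * (real H)^2)
              \<in> O(\<lambda>H. (real H) powr (1 + \<epsilon>)))"
proof (intro conjI allI impI)
  fix H :: nat
  show "(\<Sum>(d1, d2)\<in>{(d1, d2). d1 \<in> {1..H} \<and> d2 \<in> {1..H} \<and> d1 \<noteq> d2}.
               singT (nat \<bar>int d2 - int d1\<bar>))
           = 2 * (\<Sum>h = 1..H - 1. real (H - h) * singT h)" by (rule pairs_sum)
next
  fix \<epsilon> :: real assume e: "\<epsilon> > 0"
  have "(\<lambda>H::nat. (\<Sum>(d1, d2)\<in>{(d1, d2). d1 \<in> {1..H} \<and> d2 \<in> {1..H} \<and> d1 \<noteq> d2}.
                            singT (nat \<bar>int d2 - int d1\<bar>)) - LR_beta ^ 2 * (real H)^2)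
        \<in> O(\<lambda>H. real H * (15 + 8 * ln (real H)))"
  proof (rule bigoI[where c=1])
    show "\<forall>\<^sub>F H in at_top. norm ((\<Sum>(d1, d2)\<in>{(d1, d2). d1 \<in> {1..H} \<and> d2 \<in> {1..H} \<and> d1 \<noteq> d2}.
                            singT (nat \<bar>int d2 - int d1\<bar>)) - LR_beta ^ 2 * (real H)^2)
           \<le> 1 * norm (real H * (15 + 8 * ln (real H)))"
      unfolding eventually_at_top_linorder
    proof (intro exI allI impI)
      fix H :: nat assume H1: "1 \<le> H"
      have "0 \<le> real H * (15 + 8 * ln (real H))" using H1 by simp
      thus "norm ((\<Sum>(d1, d2)\<in>{(d1, d2). d1 \<in> {1..H} \<and> d2 \<in> {1..H} \<and> d1 \<noteq> d2}.
                            singT (nat \<bar>int d2 - int d1\<bar>)) - LR_beta ^ 2 * (real H)^2)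
           \<le> 1 * norm (real H * (15 + 8 * ln (real H)))"
        unfolding total_eq using total_bound[OF H1] by simp
    qed
  qed
  also have "(\<lambda>H::nat. real H * (15 + 8 * ln (real H))) \<in> O(\<lambda>H. real H powr (1 + \<epsilon>))"
    using e by real_asymp
  finally show "(\<lambda>H::nat. (\<Sum>(d1, d2)\<in>{(d1, d2). d1 \<in> {1..H} \<and> d2 \<in> {1..H} \<and> d1 \<noteq> d2}.
                            singT (nat \<bar>int d2 - int d1\<bar>)) - LR_beta ^ 2 * (real H)^2)
              \<in> O(\<lambda>H. (real H) powr (1 + \<epsilon>))" .
qed


end
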